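(* Let $Q$ be a connected quiver with two mutable vertices $1,2$ and at least one frozen vertex, such that $Q^{\mathrm{mut}}$ is mutation-infinite (equivalently $|b_{12}|\ge2$). Let $\mathbf M$ be either of the two infinite reduced mutation sequences $1212\cdots$ or $2121\cdots$. Then there is $T$ such that $Q^{(j)}_{\mathbf M}$ is sign-coherent for all $j>T$.
   Context: A quiver is a finite directed multigraph with no loops and no oriented 2-cycles, whose vertex set is partitioned into mutable and frozen vertices; arrows between two frozen vertices are ignored. $b_{ik}$ = number of arrows $i\to k$ minus number of arrows $k\to i$; $Q^{\mathrm{mut}}$ is the subquiver on the mutable vertices. Mutation $\mu_j$ at mutable $j$: for each path $i\to j\to k$ add $b_{ij}b_{jk}$ arrows $i\to k$, reverse all arrows at $j$, cancel 2-cycles. A mutation sequence $\mathbf M=m_1m_2\cdots$ has $Q^{(0)}_{\mathbf M}=Q$, $Q^{(i)}_{\mathbf M}=\mu_{m_i}(Q^{(i-1)}_{\mathbf M})$. Mutation-infinite means mutation-equivalent to infinitely many distinct quivers. Connected: the mutable part is connected as an undirected graph and every frozen vertex is adjacent to some mutable vertex. A mutable vertex adjacent to at least one frozen vertex is red (resp. green) if all arrows between it and frozen vertices point towards (resp. away from) it; a quiver is sign-coherent if every mutable vertex is red or green. *)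

theory Defs
  imports Main
begin

text \<open>A quiver (no loops, no oriented 2-cycles) on a finite vertex set is encoded by its
  skew-symmetric exchange matrix b, where b i k = #arrows i->k minus #arrows k->i.
  Entries between two frozen vertices are ignored.\<close>

definition quiver :: "'v set \<Rightarrow> 'v set \<Rightarrow> ('v \<Rightarrow> 'v \<Rightarrow> int) \<Rightarrow> bool" where
  "quiver V M b \<longleftrightarrow> finite V \<and> M \<subseteq> V \<and>
     (\<forall>i\<in>V. \<forall>k\<in>V. (i \<in> M \<or> k \<in> M) \<longrightarrow> b i k = - b k i)"

text \<open>Mutation at j: for each path i->j->k add b_ij b_jk arrows i->k, reverse arrows at j,
  cancel 2-cycles. On exchange matrices this is the following rule.\<close>

definition mutate :: "'v \<Rightarrow> ('v \<Rightarrow> 'v \<Rightarrow> int) \<Rightarrow> ('v \<Rightarrow> 'v \<Rightarrow> int)" where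
  "mutate j b = (\<lambda>i k. if i = j \<or> k = j then - b i k
       else b i k + max (b i j) 0 * max (b j k) 0 - max (b k j) 0 * max (b j i) 0)"

text \<open>Q^(0) = Q, Q^(i) = mu_{m_i}(Q^(i-1)); the sequence is indexed m 1, m 2, ...\<close>

fun mut_seq :: "('v \<Rightarrow> 'v \<Rightarrow> int) \<Rightarrow> (nat \<Rightarrow> 'v) \<Rightarrow> nat \<Rightarrow> ('v \<Rightarrow> 'v \<Rightarrow> int)" where
  "mut_seq b m 0 = b"
| "mut_seq b m (Suc i) = mutate (m (Suc i)) (mut_seq b m i)"

definition connected_quiver :: "'v set \<Rightarrow> 'v set \<Rightarrow> ('v \<Rightarrow> 'v \<Rightarrow> int) \<Rightarrow> bool" where
  "connected_quiver V M b \<longleftrightarrow>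
     (\<forall>x\<in>M. \<forall>y\<in>M. (x, y) \<in> ({(i, k). i \<in> M \<and> k \<in> M \<and> b i k \<noteq> 0})\<^sup>*) \<and>
     (\<forall>f\<in>V - M. \<exists>k\<in>M. b f k \<noteq> 0)"

definition red_vertex :: "'v set \<Rightarrow> 'v set \<Rightarrow> ('v \<Rightarrow> 'v \<Rightarrow> int) \<Rightarrow> 'v \<Rightarrow> bool" where
  "red_vertex V M b k \<longleftrightarrow> (\<exists>f\<in>V - M. b f k \<noteq> 0) \<and> (\<forall>f\<in>V - M. b f k \<ge> 0)"

definition green_vertex :: "'v set \<Rightarrow> 'v set \<Rightarrow> ('v \<Rightarrow> 'v \<Rightarrow> int) \<Rightarrow> 'v \<Rightarrow> bool" where
  "green_vertex V M b k \<longleftrightarrow> (\<exists>f\<in>V - M. b f k \<noteq> 0) \<and> (\<forall>f\<in>V - M. b f k \<le> 0)"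

definition sign_coherent :: "'v set \<Rightarrow> 'v set \<Rightarrow> ('v \<Rightarrow> 'v \<Rightarrow> int) \<Rightarrow> bool" where
  "sign_coherent V M b \<longleftrightarrow> (\<forall>k\<in>M. red_vertex V M b k \<or> green_vertex V M b k)"

end

theory Submission
  imports Defs
begin

definition F :: "int \<Rightarrow> int \<times> int \<Rightarrow> int \<times> int" where
  "F \<beta> s = (snd s + max (fst s) 0 * max \<beta> 0 - max (-\<beta>) 0 * max (- fst s) 0, - fst s)"

definition inS :: "int \<times> int \<Rightarrow> bool" where
  "inS s \<longleftrightarrow> fst s > 0 \<and> snd s \<le> 0 \<and> fst s + snd s \<ge> 0"

definition inS' :: "int \<times> int \<Rightarrow> bool" where
  "inS' s \<longleftrightarrow> fst s > 0 \<and> snd s < 0 \<and> fst s + snd s \<ge> 0"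

lemma F_pos: "\<beta> > 0 \<Longrightarrow> F \<beta> (p,q) = (q + \<beta> * max p 0, -p)"
  by (simp add: F_def)

lemma F_S: assumes "\<beta> \<ge> 2" "inS s" shows "inS' (F \<beta> s)"
proof -
  obtain p q where s: "s = (p,q)" by fastforce
  have h: "p > 0" "q \<le> 0" "p + q \<ge> 0" using assms s by (auto simp: inS_def)
  have "\<beta> * p \<ge> 2 * p" using assms(1) h(1) by (simp add: mult_right_mono)
  moreover have "F \<beta> s = (q + \<beta> * p, -p)" using assms(1) h(1) s by (simp add: F_pos)
  moreover have "0 < q + \<beta> * p" "p \<le> q + \<beta> * p" using calculation h by linarith+
  ultimately show ?thesis using h(1) unfolding inS'_def by simp
qed

lemma F_S_iter: assumes "\<beta> \<ge> 2" "inS s" shows "inS' ((F \<beta> ^^ Suc n) s)"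
proof (induction n)
  case 0 then show ?case using F_S assms by simp
next
  case (Suc n)
  then have "inS ((F \<beta> ^^ Suc n) s)" by (simp add: inS_def inS'_def)
  then show ?case using F_S assms(1) by simp
qed

lemma reach1: assumes "\<beta> \<ge> 2" "p \<ge> 0" "q \<ge> 0" "(p,q) \<noteq> (0,0)"
  shows "inS (F \<beta> (p,q))"
proof (cases "p > 0")
  case True
  have "\<beta> * p \<ge> 2 * p" using assms(1) True by (simp add: mult_right_mono)
  moreover have "F \<beta> (p,q) = (q + \<beta> * p, -p)" using assms(1) True by (simp add: F_pos)
  moreover have "0 < q + \<beta> * p" "p \<le> q + \<beta> * p" using calculation True assms by linarith+
  ultimately show ?thesis using True unfolding inS_def by simp
next
  case False
  then show ?thesis using assms by (simp add: F_pos inS_def)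
qed

lemma reach: assumes "\<beta> \<ge> 2" "(p,q) \<noteq> (0,0)"
  shows "\<exists>n. inS ((F \<beta> ^^ n) (p,q))"
  using assms(2)
proof (induction "nat p" arbitrary: p q rule: less_induct)
  case less
  have b0: "\<beta> > 0" using assms(1) by simp
  show ?case
  proof (cases "p \<le> 0")
    case True
    show ?thesis
    proof (cases "q > 0")
      case True
      have e: "F \<beta> (p,q) = (q, -p)" using \<open>p \<le> 0\<close> b0 by (simp add: F_pos)
      have "inS (F \<beta> (q, -p))" using reach1[OF assms(1)] True \<open>p \<le> 0\<close> by simp
      then have "inS ((F \<beta> ^^ 2) (p,q))" using e by (simp add: numeral_2_eq_2)
      then show ?thesis by blast
    next
      case False
      have e: "F \<beta> (p,q) = (q, -p)" using \<open>p \<le> 0\<close> b0 by (simp add: F_pos)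
      have e2: "F \<beta> (q,-p) = (-p, -q)" using False b0 by (simp add: F_pos)
      have "inS (F \<beta> (-p, -q))" using reach1[OF assms(1)] False \<open>p \<le> 0\<close> less.prems by simp
      then have "inS ((F \<beta> ^^ Suc (Suc (Suc 0))) (p,q))" using e e2 by simp
      then show ?thesis by blast
    qed
  next
    case False
    show ?thesis
    proof (cases "q \<ge> 0")
      case True
      have "inS ((F \<beta> ^^ Suc 0) (p,q))" using reach1[OF assms(1)] True False less.prems by simp
      then show ?thesis by blast
    next
      case qn: False
      show ?thesis
      proof (cases "p + q \<ge> 0")
        case True
        then have "inS ((F \<beta> ^^ 0) (p,q))" using False qn by (simp add: inS_def)
        then show ?thesis by blast
      next
        case pq: False
        define p' where "p' = q + \<beta> * p"
        have e: "F \<beta> (p,q) = (p', -p)" using False b0 by (simp add: F_pos p'_def)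
        show ?thesis
        proof (cases "nat p' < nat p")
          case True
          have "(p', -p) \<noteq> (0,0)" using False by simp
          then obtain n where "inS ((F \<beta> ^^ n) (p', -p))" using less.hyps True by blast
          moreover have "(F \<beta> ^^ Suc n) (p,q) = (F \<beta> ^^ n) (F \<beta> (p,q))"
            by (simp only: funpow_Suc_right comp_def)
          ultimately have "inS ((F \<beta> ^^ Suc n) (p,q))" using e by simp
          then show ?thesis by blast
        next
          case nl: False
          then have "p' \<ge> p" using False by simp
          then have "inS ((F \<beta> ^^ Suc 0) (p,q))" using e False by (simp add: inS_def)
          then show ?thesis by blast
        qed
      qed
    qed
  qed
qed

lemma ev_pos: assumes "\<beta> \<ge> 2" "s \<noteq> (0,0)"
  shows "\<exists>N. \<forall>n\<ge>N. inS' ((F \<beta> ^^ n) s)"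
proof -
  obtain p q where s: "s = (p,q)" by fastforce
  obtain n0 where n0: "inS ((F \<beta> ^^ n0) s)" using reach[OF assms(1)] assms(2) s by blast
  have "\<forall>n\<ge>Suc n0. inS' ((F \<beta> ^^ n) s)"
  proof (intro allI impI)
    fix n assume "n \<ge> Suc n0"
    then obtain k where k: "n = Suc k + n0" by (metis add.commute le_iff_add plus_1_eq_Suc add_Suc_right)
    have "(F \<beta> ^^ n) s = (F \<beta> ^^ Suc k) ((F \<beta> ^^ n0) s)" unfolding k funpow_add by simp
    then show "inS' ((F \<beta> ^^ n) s)" using F_S_iter[OF assms(1) n0] by simp
  qed
  then show ?thesis by blast
qed

definition neg :: "int \<times> int \<Rightarrow> int \<times> int" where
  "neg s = (- fst s, - snd s)"

lemma F_neg: "\<beta> < 0 \<Longrightarrow> F \<beta> s = neg (F (-\<beta>) (neg s))"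
  by (simp add: F_def neg_def)

lemma F_neg_iter: "\<beta> < 0 \<Longrightarrow> (F \<beta> ^^ n) s = neg ((F (-\<beta>) ^^ n) (neg s))"
proof (induction n)
  case 0 then show ?case by (simp add: neg_def)
next
  case (Suc n) then show ?case using F_neg[of \<beta>] by (simp add: neg_def)
qed

lemma ev: assumes "\<bar>\<beta>\<bar> \<ge> 2" "s \<noteq> (0,0)"
  shows "\<exists>N. \<forall>n\<ge>N. (\<beta> > 0 \<longrightarrow> fst ((F \<beta> ^^ n) s) > 0 \<and> snd ((F \<beta> ^^ n) s) < 0)
     \<and> (\<beta> < 0 \<longrightarrow> fst ((F \<beta> ^^ n) s) < 0 \<and> snd ((F \<beta> ^^ n) s) > 0)"
proof (cases "\<beta> > 0")
  case True
  then obtain N where "\<forall>n\<ge>N. inS' ((F \<beta> ^^ n) s)" using ev_pos assms by fastforce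
  then show ?thesis using True by (auto simp: inS'_def)
next
  case False
  then have bn: "\<beta> < 0" "-\<beta> \<ge> 2" using assms by auto
  have "neg s \<noteq> (0,0)" using assms(2) by (cases s) (auto simp: neg_def)
  then obtain N where N: "\<forall>n\<ge>N. inS' ((F (-\<beta>) ^^ n) (neg s))" using ev_pos bn by blast
  show ?thesis
    using False N F_neg_iter[OF bn(1)] by (auto simp: inS'_def neg_def)
qed

lemma mutate_eq: "i \<noteq> j \<Longrightarrow> k \<noteq> j \<Longrightarrow>
   mutate j b i k = b i k + max (b i j) 0 * max (b j k) 0 - max (b k j) 0 * max (b j i) 0"
  unfolding mutate_def by simp
lemma mutate_eq2: "i = j \<or> k = j \<Longrightarrow> mutate j b i k = - b i k"
  unfolding mutate_def by simp
lemma mutate_skew: assumes "b i k = - b k i" shows "mutate j b i k = - mutate j b k i"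
proof (cases "i = j \<or> k = j")
  case True then show ?thesis using assms mutate_eq2[of i j k b] mutate_eq2[of k j i b] by auto
next
  case False
  then show ?thesis using assms mutate_eq[of i j k b] mutate_eq[of k j i b] by simp
qed

lemma quiver_mutate: assumes "quiver V M b" shows "quiver V M (mutate j b)"
  using assms unfolding quiver_def
proof (intro conjI ballI impI; (elim conjE)?)
  fix i k assume "\<forall>i\<in>V. \<forall>k\<in>V. i \<in> M \<or> k \<in> M \<longrightarrow> b i k = - b k i" "i \<in> V" "k \<in> V" "i \<in> M \<or> k \<in> M"
  then have "b i k = - b k i" by blast
  then show "mutate j b i k = - mutate j b k i" by (rule mutate_skew)
qed auto

lemma quiver_seq: "quiver V M b \<Longrightarrow> quiver V M (mut_seq b m n)"
  by (induction n) (simp_all add: quiver_mutate)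

lemma qskew: "quiver V M b \<Longrightarrow> i \<in> V \<Longrightarrow> k \<in> V \<Longrightarrow> i \<in> M \<Longrightarrow> b i k = - b k i"
  unfolding quiver_def by blast

lemma main_gen:
  fixes V M :: "'v set" and b :: "'v \<Rightarrow> 'v \<Rightarrow> int" and x y :: 'v and m :: "nat \<Rightarrow> 'v"
  assumes q: "quiver V M b"
    and M: "M = {x, y}" and xy: "x \<noteq> y"
    and ne: "V - M \<noteq> {}"
    and c: "connected_quiver V M b"
    and two: "\<bar>b x y\<bar> \<ge> 2"
    and m: "m = (\<lambda>i. if odd i then x else y)"
  shows "\<exists>T. \<forall>j>T. sign_coherent V M (mut_seq b m j)"
proof -
  define B where "B = mut_seq b m"
  define \<beta> where "\<beta> = b x y"
  define nx where "nx n = (if even n then x else y)" for n :: nat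
  define ot where "ot n = (if even n then y else x)" for n :: nat
  have qB: "quiver V M (B n)" for n unfolding B_def using quiver_seq[OF q] .
  have xV: "x \<in> V" "y \<in> V" using q M by (auto simp: quiver_def)
  have Bxy: "B n x y = (if even n then \<beta> else - \<beta>)" for n
  proof (induction n)
    case 0 then show ?case by (simp add: B_def \<beta>_def)
  next
    case (Suc n)
    have "B (Suc n) x y = - B n x y" using m by (simp add: B_def mutate_def)
    then show ?case using Suc by simp
  qed
  have Byx: "B n y x = - B n x y" for n using qskew[OF qB[of n] xV(2) xV(1)] M by simp
  have Bno: "B n (nx n) (ot n) = \<beta>" for n using Bxy[of n] Byx[of n] by (simp add: nx_def ot_def)
  have Bon: "B n (ot n) (nx n) = - \<beta>" for n using Bxy[of n] Byx[of n] by (simp add: nx_def ot_def)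
  have mS: "m (Suc n) = nx n" for n using m by (simp add: nx_def)
  define s where "s f n = (B n f (nx n), B n f (ot n))" for f n
  have step: "s f (Suc n) = F \<beta> (s f n)" if f: "f \<in> V - M" for f n
  proof -
    have fne: "f \<noteq> nx n" "f \<noteq> ot n" "ot n \<noteq> nx n" using f M xy by (auto simp: nx_def ot_def)
    have nxM: "nx n \<in> M" "nx n \<in> V" using M xV by (auto simp: nx_def)
    have sk: "B n (nx n) f = - B n f (nx n)" using qskew[OF qB[of n] nxM(2) _ nxM(1)] f by simp
    have nxS: "nx (Suc n) = ot n" "ot (Suc n) = nx n" by (auto simp: nx_def ot_def)
    have BS: "B (Suc n) = mutate (nx n) (B n)" using mS by (simp add: B_def)
    have e1: "B (Suc n) f (ot n) = B n f (ot n) + max (B n f (nx n)) 0 * max (B n (nx n) (ot n)) 0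
        - max (B n (ot n) (nx n)) 0 * max (B n (nx n) f) 0"
      unfolding BS mutate_def using fne by simp
    have e2: "B (Suc n) f (nx n) = - B n f (nx n)"
      unfolding BS mutate_def by simp
    have e3: "F \<beta> (s f n) = (B n f (ot n) + max (B n f (nx n)) 0 * max \<beta> 0
        - max (-\<beta>) 0 * max (- B n f (nx n)) 0, - B n f (nx n))"
      unfolding F_def s_def by simp
    have "s f (Suc n) = (B (Suc n) f (ot n), B (Suc n) f (nx n))"
      unfolding s_def nxS by simp
    also have "\<dots> = F \<beta> (s f n)"
      unfolding e3 e1 e2 Bno Bon sk by simp
    finally show ?thesis .
  qed
  have iter: "s f n = (F \<beta> ^^ n) (s f 0)" if f: "f \<in> V - M" for f n
    by (induction n) (simp_all add: step[OF f])
  have s0: "s f 0 \<noteq> (0,0)" if f: "f \<in> V - M" for f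
  proof -
    obtain k where "k \<in> M" "b f k \<noteq> 0" using c f unfolding connected_quiver_def by blast
    then show ?thesis using M by (auto simp: s_def B_def nx_def ot_def)
  qed
  have two': "\<bar>\<beta>\<bar> \<ge> 2" unfolding \<beta>_def using two .
  have "\<forall>f\<in>V - M. \<exists>N. \<forall>n\<ge>N. (\<beta> > 0 \<longrightarrow> fst (s f n) > 0 \<and> snd (s f n) < 0)
     \<and> (\<beta> < 0 \<longrightarrow> fst (s f n) < 0 \<and> snd (s f n) > 0)"
  proof
    fix f assume f: "f \<in> V - M"
    show "\<exists>N. \<forall>n\<ge>N. (\<beta> > 0 \<longrightarrow> fst (s f n) > 0 \<and> snd (s f n) < 0)
     \<and> (\<beta> < 0 \<longrightarrow> fst (s f n) < 0 \<and> snd (s f n) > 0)"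
    proof -
      obtain N0 where N0: "\<forall>n\<ge>N0. (\<beta> > 0 \<longrightarrow> fst ((F \<beta> ^^ n) (s f 0)) > 0 \<and> snd ((F \<beta> ^^ n) (s f 0)) < 0)
     \<and> (\<beta> < 0 \<longrightarrow> fst ((F \<beta> ^^ n) (s f 0)) < 0 \<and> snd ((F \<beta> ^^ n) (s f 0)) > 0)"
        using ev[OF two' s0[OF f]] by blast
      show ?thesis
      proof (intro exI allI impI)
        fix n assume n: "N0 \<le> n"
        have e: "s f n = (F \<beta> ^^ n) (s f 0)" by (rule iter[OF f])
        show "(\<beta> > 0 \<longrightarrow> fst (s f n) > 0 \<and> snd (s f n) < 0)
     \<and> (\<beta> < 0 \<longrightarrow> fst (s f n) < 0 \<and> snd (s f n) > 0)"
          unfolding e using N0 n by blast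
      qed
    qed
  qed
  then obtain N where N: "\<forall>f\<in>V - M. \<forall>n\<ge>N f. (\<beta> > 0 \<longrightarrow> fst (s f n) > 0 \<and> snd (s f n) < 0)
     \<and> (\<beta> < 0 \<longrightarrow> fst (s f n) < 0 \<and> snd (s f n) > 0)"
    by metis
  have finV: "finite (V - M)" using q by (simp add: quiver_def)
  define T where "T = Max (N ` (V - M))"
  have NT: "N f \<le> T" if "f \<in> V - M" for f unfolding T_def using finV that by (intro Max_ge) auto
  have "sign_coherent V M (B j)" if j: "j > T" for j
  proof -
    have H: "\<forall>f\<in>V - M. (\<beta> > 0 \<longrightarrow> B j f (nx j) > 0 \<and> B j f (ot j) < 0)
     \<and> (\<beta> < 0 \<longrightarrow> B j f (nx j) < 0 \<and> B j f (ot j) > 0)"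
    proof
      fix f assume f: "f \<in> V - M"
      have "N f \<le> j" using NT[OF f] j by simp
      then show "(\<beta> > 0 \<longrightarrow> B j f (nx j) > 0 \<and> B j f (ot j) < 0)
     \<and> (\<beta> < 0 \<longrightarrow> B j f (nx j) < 0 \<and> B j f (ot j) > 0)"
        using N f by (simp add: s_def)
    qed
    obtain f0 where f0: "f0 \<in> V - M" using ne by blast
    have bnz: "\<beta> \<noteq> 0" using two' by auto
    have kk: "k = nx j \<or> k = ot j" if "k \<in> M" for k using that M by (auto simp: nx_def ot_def)
    show ?thesis unfolding sign_coherent_def
    proof
      fix k assume k: "k \<in> M"
      show "red_vertex V M (B j) k \<or> green_vertex V M (B j) k"
      proof (cases "\<beta> > 0")
        case True
        show ?thesis
        proof (cases "k = nx j")
          case True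
          then have P: "\<forall>f\<in>V - M. B j f k > 0" using H \<open>\<beta> > 0\<close> by auto
          have "\<exists>f\<in>V - M. B j f k \<noteq> 0" using P f0 by force
          moreover have "\<forall>f\<in>V - M. B j f k \<ge> 0" using P by force
          ultimately have "red_vertex V M (B j) k" unfolding red_vertex_def by blast
          then show ?thesis by simp
        next
          case False
          then have "k = ot j" using kk k by blast
          then have P: "\<forall>f\<in>V - M. B j f k < 0" using H \<open>\<beta> > 0\<close> by auto
          have "\<exists>f\<in>V - M. B j f k \<noteq> 0" using P f0 by force
          moreover have "\<forall>f\<in>V - M. B j f k \<le> 0" using P by force
          ultimately have "green_vertex V M (B j) k" unfolding green_vertex_def by blast
          then show ?thesis by simp
        qed
      next
        case False
        then have bl: "\<beta> < 0" using bnz by simp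
        show ?thesis
        proof (cases "k = nx j")
          case True
          then have P: "\<forall>f\<in>V - M. B j f k < 0" using H bl by auto
          have "\<exists>f\<in>V - M. B j f k \<noteq> 0" using P f0 by force
          moreover have "\<forall>f\<in>V - M. B j f k \<le> 0" using P by force
          ultimately have "green_vertex V M (B j) k" unfolding green_vertex_def by blast
          then show ?thesis by simp
        next
          case False
          then have "k = ot j" using kk k by blast
          then have P: "\<forall>f\<in>V - M. B j f k > 0" using H bl by auto
          have "\<exists>f\<in>V - M. B j f k \<noteq> 0" using P f0 by force
          moreover have "\<forall>f\<in>V - M. B j f k \<ge> 0" using P by force
          ultimately have "red_vertex V M (B j) k" unfolding red_vertex_def by blast
          then show ?thesis by simp
        qed
      qed
    qed
  qed
  then show ?thesis unfolding B_def by blast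
qed

theorem mainTheorem19:
  fixes V M :: "'v set" and b :: "'v \<Rightarrow> 'v \<Rightarrow> int" and v1 v2 :: 'v and m :: "nat \<Rightarrow> 'v"
  assumes "quiver V M b"
    and "M = {v1, v2}" and "v1 \<noteq> v2"
    and "V - M \<noteq> {}"
    and "connected_quiver V M b"
    and "\<bar>b v1 v2\<bar> \<ge> 2"
    and "m = (\<lambda>i. if odd i then v1 else v2) \<or> m = (\<lambda>i. if odd i then v2 else v1)"
  shows "\<exists>T. \<forall>j>T. sign_coherent V M (mut_seq b m j)"
proof -
  have "b v2 v1 = - b v1 v2" using assms(1,2) by (auto simp: quiver_def)
  then have t2: "\<bar>b v2 v1\<bar> \<ge> 2" using assms(6) by simp
  have M2: "M = {v2, v1}" using assms(2) by auto
  have ne21: "v2 \<noteq> v1" using assms(3) by simp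
  show ?thesis using assms(7)
  proof
    assume h: "m = (\<lambda>i. if odd i then v1 else v2)"
    show ?thesis by (rule main_gen[OF assms(1-6) h])
  next
    assume h: "m = (\<lambda>i. if odd i then v2 else v1)"
    show ?thesis by (rule main_gen[OF assms(1) M2 ne21 assms(4) assms(5) t2 h])
  qed
qed

end
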